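(* A pargoid $\mathbf{A}=\langle A,\cdot\rangle$ is combinatorially complete if and only if (i) there exist $s,k\in A$ making $\langle A,\cdot,s,k\rangle$ a semicombinatory algebra, and (ii) either $\mathbf{A}$ is total or $\mathbf{A}$ contains a left passive element.
   Context: A pargoid is a nonempty set $A$ with a partial binary operation $\cdot$ (application); it is total if $\cdot$ is everywhere defined. Products associate to the left, $xyz=(xy)z$, and a compound product is defined only if all its sub-products are defined (strictness). Kleene equality $M\simeq N$ means: if either side is defined then both are defined and equal. An element $a\in A$ is left passive if $a\cdot x$ is undefined for every $x\in A$. The polynomial operations of $\mathbf{A}$ form the least set of partial finitary operations on $A$ containing $\cdot$, all projections $(a_0,\dots,a_{n-1})\mapsto a_i$, and all nullary constant operations with value $a\in A$, closed under composition $f(g_0,\dots,g_{n-1})(\bar x)\simeq f(g_0(\bar x),\dots,g_{n-1}(\bar x))$ (defined only if every $g_i(\bar x)$ is defined and $f$ is defined at the resulting tuple). $\mathbf{A}$ is combinatorially complete if for all $n\ge 1$ and every $n$-ary polynomial operation $p$ of $\mathbf{A}$ there is $a\in A$ such that for all $x_1,\dots,x_n\in A$, $a x_1\cdots x_n\simeq p(x_1,\dots,x_n)$. A semicombinatory algebra is a pargoid together with elements $s,k$ such that for all $x,y,z\in A$: $sxyz\simeq xz(yz)$, and $kxy$ is defined and equals $x$. *)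

theory Defs
  imports Main
begin

text \<open>A pargoid is modelled by a type 'a (the carrier; types are nonempty)
 together with a partial application app :: 'a => 'a => 'a option
 (None = undefined).\<close>

definition apps :: "('a \<Rightarrow> 'a \<Rightarrow> 'a option) \<Rightarrow> 'a \<Rightarrow> 'a list \<Rightarrow> 'a option" where
  "apps app a xs = foldl (\<lambda>r x. Option.bind r (\<lambda>v. app v x)) (Some a) xs"

text \<open>Polynomial operations: poly_op app n f means f is an n-ary polynomial
 operation (only its values on argument lists of length n matter).\<close>
inductive poly_op :: "('a \<Rightarrow> 'a \<Rightarrow> 'a option) \<Rightarrow> nat \<Rightarrow> ('a list \<Rightarrow> 'a option) \<Rightarrow> bool"
  for app where
  op_app: "poly_op app 2 (\<lambda>xs. app (xs ! 0) (xs ! 1))"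
| op_proj: "i < n \<Longrightarrow> poly_op app n (\<lambda>xs. Some (xs ! i))"
| op_const: "poly_op app 0 (\<lambda>xs. Some a)"
| op_comp: "poly_op app m f \<Longrightarrow> (\<forall>i<m. poly_op app n (g i)) \<Longrightarrow>
    poly_op app n (\<lambda>xs. if (\<forall>i<m. g i xs \<noteq> None)
                        then f (map (\<lambda>i. the (g i xs)) [0..<m]) else None)"

definition comb_complete :: "('a \<Rightarrow> 'a \<Rightarrow> 'a option) \<Rightarrow> bool" where
  "comb_complete app \<longleftrightarrow>
     (\<forall>n p. n \<ge> 1 \<longrightarrow> poly_op app n p \<longrightarrow>
        (\<exists>a. \<forall>xs. length xs = n \<longrightarrow> apps app a xs = p xs))"

definition semicombinatory :: "('a \<Rightarrow> 'a \<Rightarrow> 'a option) \<Rightarrow> 'a \<Rightarrow> 'a \<Rightarrow> bool" where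
  "semicombinatory app s k \<longleftrightarrow>
     (\<forall>x y z. apps app s [x, y, z] =
        Option.bind (app x z) (\<lambda>u. Option.bind (app y z) (\<lambda>v. app u v)))
   \<and> (\<forall>x y. apps app k [x, y] = Some x)"

definition total :: "('a \<Rightarrow> 'a \<Rightarrow> 'a option) \<Rightarrow> bool" where
  "total app \<longleftrightarrow> (\<forall>x y. app x y \<noteq> None)"

definition left_passive :: "('a \<Rightarrow> 'a \<Rightarrow> 'a option) \<Rightarrow> 'a \<Rightarrow> bool" where
  "left_passive app a \<longleftrightarrow> (\<forall>x. app a x = None)"

end

theory Submission
  imports Defs
begin

datatype 'a tm = Vr nat | Cn 'a | Ap "'a tm" "'a tm"

fun ev :: "('a \<Rightarrow> 'a \<Rightarrow> 'a option) \<Rightarrow> 'a list \<Rightarrow> 'a tm \<Rightarrow> 'a option" where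
  "ev app xs (Vr i) = Some (xs ! i)"
| "ev app xs (Cn a) = Some a"
| "ev app xs (Ap t u) = Option.bind (ev app xs t) (\<lambda>v. Option.bind (ev app xs u) (\<lambda>w. app v w))"

fun wf :: "nat \<Rightarrow> 'a tm \<Rightarrow> bool" where
  "wf n (Vr i) = (i < n)"
| "wf n (Cn a) = True"
| "wf n (Ap t u) = (wf n t \<and> wf n u)"

fun subst :: "(nat \<Rightarrow> 'a tm) \<Rightarrow> 'a tm \<Rightarrow> 'a tm" where
  "subst \<sigma> (Vr i) = \<sigma> i"
| "subst \<sigma> (Cn a) = Cn a"
| "subst \<sigma> (Ap t u) = Ap (subst \<sigma> t) (subst \<sigma> u)"

fun wrap :: "'a \<Rightarrow> 'a tm \<Rightarrow> 'a tm list \<Rightarrow> 'a tm" where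
  "wrap k t [] = t"
| "wrap k t (u # us) = Ap (Ap (Cn k) (wrap k t us)) u"

lemma apps_Nil[simp]: "apps app a [] = Some a"
  by (simp add: apps_def)

lemma apps_snoc: "apps app a (xs @ [x]) = Option.bind (apps app a xs) (\<lambda>v. app v x)"
  by (simp add: apps_def)

lemma apps_Cons_None: "app a x = None \<Longrightarrow> apps app a (x # xs) = None"
proof -
  have "foldl (\<lambda>r x. Option.bind r (\<lambda>v. app v x)) None xs = None" for xs
    by (induction xs) auto
  thus "app a x = None \<Longrightarrow> apps app a (x # xs) = None" by (simp add: apps_def)
qed

lemma apps2: "apps app a [x, y] = Option.bind (app a x) (\<lambda>v. app v y)"
  by (simp add: apps_def)

lemma apps3: "apps app a [x, y, z] = Option.bind (Option.bind (app a x) (\<lambda>v. app v y)) (\<lambda>v. app v z)"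
  by (simp add: apps_def)

lemma wf_subst: "wf m t \<Longrightarrow> (\<forall>i<m. wf n (\<sigma> i)) \<Longrightarrow> wf n (subst \<sigma> t)"
  by (induction t) auto

lemma wf_wrap: "wf n t \<Longrightarrow> (\<forall>u\<in>set us. wf n u) \<Longrightarrow> wf n (wrap k t us)"
  by (induction us) auto

lemma ev_subst: "wf m t \<Longrightarrow> (\<forall>i<m. ev app xs (\<sigma> i) \<noteq> None) \<Longrightarrow>
  ev app xs (subst \<sigma> t) = ev app (map (\<lambda>i. the (ev app xs (\<sigma> i))) [0..<m]) t"
  by (induction t) auto

lemma ev_wrap:
  assumes k: "\<forall>x y. apps app k [x, y] = Some x"
  shows "ev app xs (wrap k t us) = (if \<forall>u\<in>set us. ev app xs u \<noteq> None then ev app xs t else None)"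
proof (induction us)
  case Nil then show ?case by simp
next
  case (Cons u us)
  have kk: "Option.bind (app k a) (\<lambda>v. app v b) = Some a" for a b
    using k apps2 by metis
  show ?case
  proof (cases "ev app xs u")
    case None then show ?thesis by (auto split: option.splits)
  next
    case (Some b)
    show ?thesis
    proof (cases "ev app xs (wrap k t us)")
      case None
      then show ?thesis using Cons Some by (auto split: if_splits)
    next
      case (Some a)
      have "ev app xs (wrap k t (u # us)) = Some a"
        using Some \<open>ev app xs u = Some b\<close> kk[of a b]
        by (auto split: option.splits)
      then show ?thesis using Cons Some \<open>ev app xs u = Some b\<close> by (auto split: if_splits)
    qed
  qed
qed

lemma poly_to_tm:
  assumes k: "\<forall>x y. apps app k [x, y] = Some x"
  shows "poly_op app n f \<Longrightarrow> \<exists>t. wf n t \<and> (\<forall>xs. length xs = n \<longrightarrow> ev app xs t = f xs)"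
proof (induction rule: poly_op.induct)
  case op_app
  show ?case by (rule exI[of _ "Ap (Vr 0) (Vr 1)"]) auto
next
  case (op_proj i n)
  then show ?case by (intro exI[of _ "Vr i"]) auto
next
  case (op_const a)
  show ?case by (rule exI[of _ "Cn a"]) auto
next
  case (op_comp m f n g)
  obtain tf where tf: "wf m tf" "\<forall>ys. length ys = m \<longrightarrow> ev app ys tf = f ys"
    using op_comp.IH by blast
  have "\<forall>i<m. \<exists>t. wf n t \<and> (\<forall>xs. length xs = n \<longrightarrow> ev app xs t = g i xs)"
    using op_comp.IH by blast
  then obtain T where T: "\<forall>i<m. wf n (T i) \<and> (\<forall>xs. length xs = n \<longrightarrow> ev app xs (T i) = g i xs)"
    by metis
  let ?t = "wrap k (subst T tf) (map T [0..<m])"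
  show ?case
  proof (intro exI conjI allI impI)
    show "wf n ?t" using T tf by (auto intro!: wf_wrap wf_subst)
  next
    fix xs :: "'a list" assume len: "length xs = n"
    have e: "ev app xs ?t = (if \<forall>i<m. ev app xs (T i) \<noteq> None then ev app xs (subst T tf) else None)"
      using ev_wrap[OF k, of xs "subst T tf" "map T [0..<m]"] by force
    have g: "\<forall>i<m. ev app xs (T i) = g i xs" using T len by blast
    show "ev app xs ?t = (if \<forall>i<m. g i xs \<noteq> None then f (map (\<lambda>i. the (g i xs)) [0..<m]) else None)"
    proof (cases "\<forall>i<m. g i xs \<noteq> None")
      case True
      have "ev app xs (subst T tf) = ev app (map (\<lambda>i. the (ev app xs (T i))) [0..<m]) tf"
        using ev_subst[OF tf(1)] True g by simp
      also have "map (\<lambda>i. the (ev app xs (T i))) [0..<m] = map (\<lambda>i. the (g i xs)) [0..<m]"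
        using g by auto
      also have "ev app \<dots> tf = f (map (\<lambda>i. the (g i xs)) [0..<m])" using tf(2) by simp
      finally show ?thesis using e True g by simp
    next
      case False
      then show ?thesis using e g by auto
    qed
  qed
qed

lemma comp2:
  assumes "poly_op app n g0" "poly_op app n g1"
  shows "poly_op app n (\<lambda>xs. Option.bind (g0 xs) (\<lambda>u. Option.bind (g1 xs) (\<lambda>v. app u v)))"
proof -
  let ?g = "\<lambda>i::nat. if i = 0 then g0 else g1"
  have "poly_op app n (\<lambda>xs. if (\<forall>i<2. ?g i xs \<noteq> None)
      then (\<lambda>xs. app (xs ! 0) (xs ! 1)) (map (\<lambda>i. the (?g i xs)) [0..<2]) else None)"
    by (rule op_comp[OF op_app]) (auto intro: assms)
  moreover have "(\<lambda>xs. if (\<forall>i<2. ?g i xs \<noteq> None)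
      then (\<lambda>xs. app (xs ! 0) (xs ! 1)) (map (\<lambda>i. the (?g i xs)) [0..<2]) else None)
    = (\<lambda>xs. Option.bind (g0 xs) (\<lambda>u. Option.bind (g1 xs) (\<lambda>v. app u v)))"
  proof
    fix xs
    have u: "[0..<2] = [0::nat, 1]" by (simp add: upt_rec)
    have a: "(\<forall>i<2. ?g i xs \<noteq> None) = (g0 xs \<noteq> None \<and> g1 xs \<noteq> None)"
      by (auto simp: less_2_cases_iff)
    show "(if (\<forall>i<2. ?g i xs \<noteq> None)
      then (\<lambda>xs. app (xs ! 0) (xs ! 1)) (map (\<lambda>i. the (?g i xs)) [0..<2]) else None)
      = Option.bind (g0 xs) (\<lambda>u. Option.bind (g1 xs) (\<lambda>v. app u v))"
      unfolding a u by (auto split: option.splits)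
  qed
  ultimately show ?thesis by simp
qed

lemma tm_to_poly: "wf n t \<Longrightarrow> poly_op app n (\<lambda>xs. ev app xs t)"
proof (induction t)
  case (Vr i) then show ?case by (simp add: op_proj)
next
  case (Cn a)
  show ?case using op_comp[OF op_const[of app a], of n] by simp
next
  case (Ap t u)
  then show ?case using comp2[of app n "\<lambda>xs. ev app xs t" "\<lambda>xs. ev app xs u"] by simp
qed

fun ab :: "'a \<Rightarrow> 'a \<Rightarrow> nat \<Rightarrow> 'a tm \<Rightarrow> 'a tm" where
  "ab s k n (Vr i) = (if i = n then Ap (Ap (Cn s) (Cn k)) (Cn k) else Ap (Cn k) (Vr i))"
| "ab s k n (Cn a) = Ap (Cn k) (Cn a)"
| "ab s k n (Ap t u) = Ap (Ap (Cn s) (ab s k n t)) (ab s k n u)"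

lemma wf_ab: "wf (Suc n) t \<Longrightarrow> wf n (ab s k n t)"
  by (induction t) auto

lemma ev_ab:
  assumes sk: "semicombinatory app s k"
  shows "wf (Suc n) t \<Longrightarrow> length xs = n \<Longrightarrow>
    Option.bind (ev app xs (ab s k n t)) (\<lambda>v. app v x) = ev app (xs @ [x]) t"
proof (induction t)
  have S: "\<And>x y z. Option.bind (Option.bind (app s x) (\<lambda>v. app v y)) (\<lambda>v. app v z) =
        Option.bind (app x z) (\<lambda>u. Option.bind (app y z) (\<lambda>v. app u v))"
    using sk unfolding semicombinatory_def apps3 by metis
  have K: "\<And>x y. Option.bind (app k x) (\<lambda>v. app v y) = Some x"
    using sk unfolding semicombinatory_def apps2 by metis
  {
  case (Vr i)
  show ?case
  proof (cases "i = n")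
    case True
    obtain a where a: "app k x = Some a" using K[of x x] by (cases "app k x") auto
    have "app a a = Some x" using K[of x a] a by simp
    then show ?thesis using True S[of k k x] Vr a by (simp add: nth_append)
  next
    case False
    then show ?thesis using Vr K by (simp add: nth_append)
  qed
  next
  case (Cn a)
  then show ?case using K by simp
  next
  case (Ap t u)
  show ?case
  proof (cases "ev app xs (ab s k n t)")
    case None
    then show ?thesis using Ap by auto
  next
    case (Some a)
    show ?thesis
    proof (cases "ev app xs (ab s k n u)")
      case None
      then show ?thesis using Ap by (auto split: option.splits)
    next
      case (Some b)
      have "Option.bind (ev app xs (ab s k n (Ap t u))) (\<lambda>v. app v x)
          = Option.bind (Option.bind (app s a) (\<lambda>v. app v b)) (\<lambda>v. app v x)"
        using \<open>ev app xs (ab s k n t) = Some a\<close> Some by simp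
      also have "\<dots> = Option.bind (app a x) (\<lambda>u. Option.bind (app b x) (\<lambda>v. app u v))" by (rule S)
      also have "\<dots> = ev app (xs @ [x]) (Ap t u)"
        using Ap \<open>ev app xs (ab s k n t) = Some a\<close> Some by (metis bind.simps(2) ev.simps(3) wf.simps(3))
      finally show ?thesis .
    qed
  qed
  }
qed

lemma closed_rep:
  assumes sk: "semicombinatory app s k"
  shows "wf n t \<Longrightarrow> \<exists>c. \<forall>xs. length xs = n \<longrightarrow>
     Option.bind (ev app [] c) (\<lambda>a. apps app a xs) = ev app xs t"
proof (induction n arbitrary: t)
  case 0
  then show ?case by (intro exI[of _ t]) simp
next
  case (Suc n)
  obtain c where c: "\<forall>ys. length ys = n \<longrightarrow>
     Option.bind (ev app [] c) (\<lambda>a. apps app a ys) = ev app ys (ab s k n t)"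
    using Suc.IH[OF wf_ab[OF Suc.prems]] by blast
  show ?case
  proof (intro exI allI impI)
    fix xs :: "'a list" assume "length xs = Suc n"
    then obtain ys x where xs: "xs = ys @ [x]" "length ys = n"
      by (metis length_Suc_conv_rev)
    have "Option.bind (ev app [] c) (\<lambda>a. apps app a xs)
       = Option.bind (Option.bind (ev app [] c) (\<lambda>a. apps app a ys)) (\<lambda>v. app v x)"
      by (simp add: xs apps_snoc bind_assoc)
    also have "\<dots> = Option.bind (ev app ys (ab s k n t)) (\<lambda>v. app v x)" using c xs by simp
    also have "\<dots> = ev app xs t" using ev_ab[OF sk Suc.prems xs(2)] xs by simp
    finally show "Option.bind (ev app [] c) (\<lambda>a. apps app a xs) = ev app xs t" .
  qed
qed

lemma ev_total: "total app \<Longrightarrow> ev app xs t \<noteq> None"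
  by (induction t) (auto simp: total_def)

theorem theorem2:
  fixes app :: "'a \<Rightarrow> 'a \<Rightarrow> 'a option"
  shows "comb_complete app \<longleftrightarrow>
    ((\<exists>s k. semicombinatory app s k) \<and> (total app \<or> (\<exists>a. left_passive app a)))"
proof
  assume cc: "comb_complete app"
  have rep: "\<exists>a. \<forall>xs. length xs = n \<longrightarrow> apps app a xs = ev app xs t" if "n \<ge> 1" "wf n t" for n t
    using cc tm_to_poly[OF that(2)] that(1) unfolding comb_complete_def by blast
  obtain k where k: "\<forall>xs. length xs = 2 \<longrightarrow> apps app k xs = ev app xs (Vr 0)"
    using rep[of 2 "Vr 0"] by auto
  obtain s where s: "\<forall>xs. length xs = 3 \<longrightarrow> apps app s xs = ev app xs (Ap (Ap (Vr 0) (Vr 2)) (Ap (Vr 1) (Vr 2)))"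
    using rep[of 3 "Ap (Ap (Vr 0) (Vr 2)) (Ap (Vr 1) (Vr 2))"] by auto
  have "semicombinatory app s k"
    unfolding semicombinatory_def
  proof (intro conjI allI)
    fix x y z
    show "apps app s [x, y, z] = Option.bind (app x z) (\<lambda>u. Option.bind (app y z) (\<lambda>v. app u v))"
      using s[rule_format, of "[x,y,z]"] by simp
  next
    fix x y
    show "apps app k [x, y] = Some x" using k[rule_format, of "[x,y]"] by simp
  qed
  moreover have "total app \<or> (\<exists>a. left_passive app a)"
  proof (cases "total app")
    case False
    then obtain a b where ab: "app a b = None" by (auto simp: total_def)
    obtain e where e: "\<forall>xs. length xs = 1 \<longrightarrow> apps app e xs = ev app xs (Ap (Cn a) (Cn b))"
      using rep[of 1 "Ap (Cn a) (Cn b)"] by auto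
    have "left_passive app e"
      unfolding left_passive_def
    proof
      fix x
      show "app e x = None" using e[rule_format, of "[x]"] ab by (simp add: apps_def)
    qed
    then show ?thesis by blast
  qed simp
  ultimately show "(\<exists>s k. semicombinatory app s k) \<and> (total app \<or> (\<exists>a. left_passive app a))"
    by blast
next
  assume "(\<exists>s k. semicombinatory app s k) \<and> (total app \<or> (\<exists>a. left_passive app a))"
  then obtain s k where sk: "semicombinatory app s k"
    and tp: "total app \<or> (\<exists>a. left_passive app a)" by blast
  have k: "\<forall>x y. apps app k [x, y] = Some x" using sk by (simp add: semicombinatory_def)
  show "comb_complete app"
    unfolding comb_complete_def
  proof (intro allI impI)
    fix n p assume n: "1 \<le> n" and p: "poly_op app n p"
    obtain t where t: "wf n t" "\<forall>xs. length xs = n \<longrightarrow> ev app xs t = p xs"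
      using poly_to_tm[OF k p] by blast
    obtain c where c: "\<forall>xs. length xs = n \<longrightarrow> Option.bind (ev app [] c) (\<lambda>a. apps app a xs) = ev app xs t"
      using closed_rep[OF sk t(1)] by blast
    show "\<exists>a. \<forall>xs. length xs = n \<longrightarrow> apps app a xs = p xs"
    proof (cases "ev app [] c")
      case (Some a)
      then show ?thesis using c t by (intro exI[of _ a]) auto
    next
      case None
      with tp ev_total obtain e where e: "left_passive app e" by blast
      show ?thesis
      proof (intro exI[of _ e] allI impI)
        fix xs :: "'a list" assume len: "length xs = n"
        then obtain x ys where xs: "xs = x # ys" using n by (cases xs) auto
        have "apps app e xs = None" using e xs apps_Cons_None by (metis left_passive_def)
        moreover have "p xs = None" using c t len None by auto
        ultimately show "apps app e xs = p xs" by simp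
      qed
    qed
  qed
qed

end
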